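(* There is an absolute constant $c>0$ such that for every sum-bucket game on a simple graph with $n\ge2$ nodes whose strategy paths are all simple, and every optimal routing $\mathbf p^*$ with $\overline C^*=\overline C(\mathbf p^* )$, $\overline D^*=\overline D(\mathbf p^* )$, the price of anarchy satisfies $$PoA\le c\cdot\frac{\overline C^*\cdot\overline D^*}{\overline C^*+\overline D^*}\cdot\lg^2 n.$$
   Context: A routing game $(\mathbf N,G,\mathcal P)$: players $\{1,\dots,N\}$ ($N\ge1$), a simple graph $G$ with $n$ nodes, and for each player $i$ a nonempty finite set $\mathcal P_i$ of simple paths (each with at least one edge) from $u_i$ to $v_i$; $\mathcal P=\bigcup_i\mathcal P_i$, $L=\max_{p\in\mathcal P}|p|$ (number of edges). A routing is $\mathbf p=[p_1,\dots,p_N]$, $p_i\in\mathcal P_i$. Sum-bucket game: for $k=0,\dots,\lceil\lg L\rceil$ bucket $B_k$ = paths in $\mathcal P$ with length in $[2^k,2^{k+1})$, $B(q)$ = bucket index of $q$; normalized length $\overline D_q=2^{B(q)+1}-1$; $\overline C_{e,q}(\mathbf p)$ = number of players $j$ with $e\in p_j$ and $B(p_j)=B(q)$; $\overline C_q(\mathbf p)=\max_{e\in q}\overline C_{e,q}(\mathbf p)$; $\overline C_i=\overline C_{p_i}$, $\overline D_i=\overline D_{p_i}$; player cost $pc_i=\overline C_i+\overline D_i$; $\overline C(\mathbf p)=\max_i\overline C_i$, $\overline D(\mathbf p)=\max_i\overline D_i$; social cost $SC(\mathbf p)=\overline C(\mathbf p)+\overline D(\mathbf p)$. A Nash-routing: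 no player can strictly lower its cost by unilaterally changing its path within $\mathcal P_i$; an optimal routing minimizes $SC$, with value $SC^*$. $PoA=\sup_{\mathbf p}SC(\mathbf p)/SC^*$ over all Nash-routings $\mathbf p$ (which exist). $\lg=\log_2$. *)

theory Defs
  imports Complex_Main
begin

definition simple_graph :: "nat set \<Rightarrow> nat set set \<Rightarrow> bool" where
  "simple_graph V E \<longleftrightarrow> finite V \<and> (\<forall>e\<in>E. card e = 2 \<and> e \<subseteq> V)"

definition path_edges :: "nat list \<Rightarrow> nat set set" where
  "path_edges q = {{q ! k, q ! Suc k} | k. Suc k < length q}"

definition plen :: "nat list \<Rightarrow> nat" where
  "plen q = length q - 1"

definition simple_path :: "nat set \<Rightarrow> nat set set \<Rightarrow> nat \<Rightarrow> nat \<Rightarrow> nat list \<Rightarrow> bool" where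
  "simple_path V E u w q \<longleftrightarrow> length q \<ge> 2 \<and> distinct q \<and> set q \<subseteq> V \<and>
     hd q = u \<and> last q = w \<and> path_edges q \<subseteq> E"

definition routing_game ::
  "nat set \<Rightarrow> nat set set \<Rightarrow> nat \<Rightarrow> (nat \<Rightarrow> nat list set) \<Rightarrow> (nat \<Rightarrow> nat) \<Rightarrow> (nat \<Rightarrow> nat) \<Rightarrow> bool" where
  "routing_game V E N P src dst \<longleftrightarrow> simple_graph V E \<and> N \<ge> 1 \<and>
     (\<forall>i\<in>{1..N}. finite (P i) \<and> P i \<noteq> {} \<and> (\<forall>q\<in>P i. simple_path V E (src i) (dst i) q))"

definition is_routing :: "nat \<Rightarrow> (nat \<Rightarrow> nat list set) \<Rightarrow> (nat \<Rightarrow> nat list) \<Rightarrow> bool" where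
  "is_routing N P p \<longleftrightarrow> (\<forall>i\<in>{1..N}. p i \<in> P i)"

definition bucket :: "nat list \<Rightarrow> nat" where
  "bucket q = nat \<lfloor>log 2 (real (plen q))\<rfloor>"

definition Dbar :: "nat list \<Rightarrow> nat" where
  "Dbar q = 2 ^ (bucket q + 1) - 1"

definition Cbar_edge :: "nat \<Rightarrow> (nat \<Rightarrow> nat list) \<Rightarrow> nat set \<Rightarrow> nat list \<Rightarrow> nat" where
  "Cbar_edge N p e q = card {j\<in>{1..N}. e \<in> path_edges (p j) \<and> bucket (p j) = bucket q}"

definition Cbar_path :: "nat \<Rightarrow> (nat \<Rightarrow> nat list) \<Rightarrow> nat list \<Rightarrow> nat" where
  "Cbar_path N p q = Max ((\<lambda>e. Cbar_edge N p e q) ` path_edges q)"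

definition player_cost :: "nat \<Rightarrow> (nat \<Rightarrow> nat list) \<Rightarrow> nat \<Rightarrow> nat" where
  "player_cost N p i = Cbar_path N p (p i) + Dbar (p i)"

definition Cbar :: "nat \<Rightarrow> (nat \<Rightarrow> nat list) \<Rightarrow> nat" where
  "Cbar N p = Max ((\<lambda>i. Cbar_path N p (p i)) ` {1..N})"

definition Dbar_max :: "nat \<Rightarrow> (nat \<Rightarrow> nat list) \<Rightarrow> nat" where
  "Dbar_max N p = Max ((\<lambda>i. Dbar (p i)) ` {1..N})"

definition social_cost :: "nat \<Rightarrow> (nat \<Rightarrow> nat list) \<Rightarrow> nat" where
  "social_cost N p = Cbar N p + Dbar_max N p"

definition nash_routing :: "nat \<Rightarrow> (nat \<Rightarrow> nat list set) \<Rightarrow> (nat \<Rightarrow> nat list) \<Rightarrow> bool" where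
  "nash_routing N P p \<longleftrightarrow> is_routing N P p \<and>
     (\<forall>i\<in>{1..N}. \<forall>q\<in>P i. player_cost N p i \<le> player_cost N (p(i := q)) i)"

definition optimal_routing :: "nat \<Rightarrow> (nat \<Rightarrow> nat list set) \<Rightarrow> (nat \<Rightarrow> nat list) \<Rightarrow> bool" where
  "optimal_routing N P p \<longleftrightarrow> is_routing N P p \<and>
     (\<forall>r. is_routing N P r \<longrightarrow> social_cost N p \<le> social_cost N r)"

end

theory Submission
  imports Defs
begin


lemma bucket_bounds:
  assumes "plen q \<ge> 1"
  shows "2 ^ bucket q \<le> plen q \<and> plen q < 2 ^ (bucket q + 1)"
proof -
  have "log 2 (real (plen q)) \<ge> 0" using assms by simp
  hence fl: "\<lfloor>log 2 (real (plen q))\<rfloor> = int (bucket q)"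
    unfolding bucket_def by simp
  have "\<lfloor>log (real (2::nat)) (real (plen q))\<rfloor> = int (bucket q)" using fl by simp
  hence "(2::nat) ^ bucket q \<le> plen q \<and> plen q < 2 ^ (bucket q + 1)"
    using floor_log_nat_eq_powr_iff[of 2 "plen q" "bucket q"] assms by simp
  thus ?thesis by simp
qed

lemma plen_le_Dbar: "plen q \<ge> 1 \<Longrightarrow> plen q \<le> Dbar q"
proof -
  assume "plen q \<ge> 1"
  hence "plen q < 2 ^ (bucket q + 1)" using bucket_bounds[of q] by blast
  thus ?thesis unfolding Dbar_def by simp
qed

lemma Dbar_pos: "Dbar q \<ge> 1"
proof -
  have "(1::nat) \<le> 2 ^ bucket q" by simp
  hence "(2::nat) \<le> 2 ^ (bucket q + 1)" by simp
  thus ?thesis unfolding Dbar_def by linarith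
qed

lemma bucket_less: "plen q \<ge> 1 \<Longrightarrow> bucket q < plen q \<or> bucket q = 0"
proof -
  assume a: "plen q \<ge> 1"
  have "bucket q < 2 ^ bucket q" by simp
  thus ?thesis using bucket_bounds[OF a] by linarith
qed

lemma fin_idx: "{k. Suc k < length q} = {..<length q - 1}" by auto

lemma path_edges_eq: "path_edges q = (\<lambda>k. {q ! k, q ! Suc k}) ` {k. Suc k < length q}"
  unfolding path_edges_def by auto

lemma path_edges_finite: "finite (path_edges q)"
  unfolding path_edges_eq fin_idx by simp

lemma path_edges_card: "card (path_edges q) \<le> plen q"
proof -
  have "card (path_edges q) \<le> card {k. Suc k < length q}"
    unfolding path_edges_eq by (rule card_image_le) (simp add: fin_idx)
  also have "{k. Suc k < length q} = {..<length q - 1}" by auto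
  finally show ?thesis unfolding plen_def by simp
qed

lemma path_edges_ne: "length q \<ge> 2 \<Longrightarrow> path_edges q \<noteq> {}"
  unfolding path_edges_def by (auto intro!: exI[of _ 0])

lemma simple_path_plen:
  assumes "simple_path V E u w q" "finite V"
  shows "plen q \<ge> 1 \<and> plen q < card V"
proof -
  have "length q = card (set q)" using assms distinct_card unfolding simple_path_def by metis
  also have "\<dots> \<le> card V" using assms card_mono unfolding simple_path_def by metis
  finally show ?thesis using assms unfolding simple_path_def plen_def by auto
qed

lemma card_E_le:
  assumes "simple_graph V E"
  shows "finite E \<and> card E \<le> card V ^ 2"
proof -
  have sub: "E \<subseteq> (\<lambda>(x,y). {x,y}) ` (V \<times> V)"
  proof
    fix e assume "e \<in> E"
    hence "card e = 2" "e \<subseteq> V" using assms unfolding simple_graph_def by auto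
    then obtain x y where "e = {x,y}" by (meson card_2_iff)
    thus "e \<in> (\<lambda>(x,y). {x,y}) ` (V \<times> V)" using \<open>e \<subseteq> V\<close> by auto
  qed
  have fV: "finite V" using assms unfolding simple_graph_def by auto
  have "card E \<le> card ((\<lambda>(x,y). {x,y}) ` (V \<times> V))" using sub fV by (intro card_mono) auto
  also have "\<dots> \<le> card (V \<times> V)" by (rule card_image_le) (simp add: fV)
  moreover have "finite E" using sub fV by (meson finite_SigmaI finite_imageI finite_subset)
  ultimately show ?thesis by (auto simp: card_cartesian_product power2_eq_square)
qed



locale nash_setup =
  fixes V :: "nat set" and E :: "nat set set" and N :: nat and P :: "nat \<Rightarrow> nat list set"
    and src dst :: "nat \<Rightarrow> nat" and s p :: "nat \<Rightarrow> nat list"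
  assumes rg: "routing_game V E N P src dst" and nV: "card V \<ge> 2"
    and opt: "optimal_routing N P s" and nash: "nash_routing N P p"
begin

definition cong :: "nat set \<Rightarrow> nat \<Rightarrow> nat" where
  "cong f b = card {j\<in>{1..N}. f \<in> path_edges (p j) \<and> bucket (p j) = b}"

definition Bs :: "nat set" where "Bs = (\<lambda>j. bucket (s j)) ` {1..N}"

definition A :: "nat \<Rightarrow> (nat set \<times> nat) set" where
  "A t = {(f,b). f \<in> E \<and> b \<in> Bs \<and> t \<le> cong f b}"

abbreviation "Cs \<equiv> Cbar N s"
abbreviation "Ds \<equiv> Dbar_max N s"

lemma finV: "finite V" using rg unfolding routing_game_def simple_graph_def by auto

lemma N1: "N \<ge> 1" using rg unfolding routing_game_def by auto

lemma sp_p: "j \<in> {1..N} \<Longrightarrow> simple_path V E (src j) (dst j) (p j)"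
  using rg nash unfolding routing_game_def nash_routing_def is_routing_def by blast

lemma sp_s: "j \<in> {1..N} \<Longrightarrow> simple_path V E (src j) (dst j) (s j)"
  using rg opt unfolding routing_game_def optimal_routing_def is_routing_def by blast

lemma sp_facts:
  assumes "simple_path V E u w q"
  shows "plen q \<ge> 1" "plen q < card V" "path_edges q \<subseteq> E" "path_edges q \<noteq> {}"
  using simple_path_plen[OF assms finV] assms path_edges_ne unfolding simple_path_def by auto

lemma Cbar_edge_cong: "Cbar_edge N p f q = cong f (bucket q)"
  unfolding Cbar_edge_def cong_def by simp

lemma pc_lower:
  assumes "j \<in> {1..N}" "e \<in> path_edges (p j)"
  shows "cong e (bucket (p j)) + Dbar (p j) \<le> player_cost N p j"
proof -
  have "Cbar_edge N p e (p j) \<le> Cbar_path N p (p j)"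
    unfolding Cbar_path_def using assms by (intro Max_ge) (auto simp: path_edges_finite)
  thus ?thesis unfolding player_cost_def Cbar_edge_cong by simp
qed

lemma Dbar_s_le: "j \<in> {1..N} \<Longrightarrow> Dbar (s j) \<le> Ds"
  unfolding Dbar_max_def by (intro Max_ge) auto

lemma Cbar_s_le: "j \<in> {1..N} \<Longrightarrow> Cbar_path N s (s j) \<le> Cs"
  unfolding Cbar_def by (intro Max_ge) auto

lemma Ds_pos: "Ds \<ge> 1" using Dbar_s_le[of 1] N1 Dbar_pos[of "s 1"] by auto

lemma fiber_le:
  assumes "j \<in> {1..N}" "f \<in> path_edges (s j)"
  shows "card {i\<in>{1..N}. f \<in> path_edges (s i) \<and> bucket (s i) = bucket (s j)} \<le> Cs"
proof -
  have "Cbar_edge N s f (s j) \<le> Cbar_path N s (s j)"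
    unfolding Cbar_path_def using assms by (intro Max_ge) (auto simp: path_edges_finite)
  thus ?thesis using Cbar_s_le[OF assms(1)] unfolding Cbar_edge_def by simp
qed

lemma Cs_pos: "Cs \<ge> 1"
proof -
  have j: "(1::nat) \<in> {1..N}" using N1 by auto
  obtain f where f: "f \<in> path_edges (s 1)" using sp_facts(4)[OF sp_s[OF j]] by blast
  have "Cbar_edge N s f (s 1) \<le> Cbar_path N s (s 1)"
    unfolding Cbar_path_def using f by (intro Max_ge) (auto simp: path_edges_finite)
  moreover have "Cbar_edge N s f (s 1) \<ge> 1"
  proof -
    have "1 \<in> {i\<in>{1..N}. f \<in> path_edges (s i) \<and> bucket (s i) = bucket (s 1)}" using f j by simp
    hence "card {i\<in>{1..N}. f \<in> path_edges (s i) \<and> bucket (s i) = bucket (s 1)} > 0"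
      by (intro card_gt_0_iff[THEN iffD2]) auto
    thus ?thesis unfolding Cbar_edge_def by simp
  qed
  ultimately show ?thesis using Cbar_s_le[OF j] by simp
qed

lemma pc_upper:
  assumes j: "j \<in> {1..N}"
  shows "\<exists>f\<in>path_edges (s j). player_cost N p j \<le> cong f (bucket (s j)) + 1 + Ds"
proof -
  define p' where "p' = p(j := s j)"
  have sj: "s j \<in> P j" using opt j unfolding optimal_routing_def is_routing_def by blast
  have nash_ineq: "player_cost N p j \<le> player_cost N p' j"
    using nash j sj unfolding nash_routing_def p'_def by blast
  have ne: "path_edges (s j) \<noteq> {}" using sp_facts(4)[OF sp_s[OF j]] .
  have "Cbar_path N p' (s j) \<in> (\<lambda>e. Cbar_edge N p' e (s j)) ` path_edges (s j)"
    unfolding Cbar_path_def using ne by (intro Max_in) (auto simp: path_edges_finite)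
  then obtain f where f: "f \<in> path_edges (s j)" and fe: "Cbar_path N p' (s j) = Cbar_edge N p' f (s j)"
    by blast
  have "{i\<in>{1..N}. f \<in> path_edges (p' i) \<and> bucket (p' i) = bucket (s j)}
        \<subseteq> insert j {i\<in>{1..N}. f \<in> path_edges (p i) \<and> bucket (p i) = bucket (s j)}"
    unfolding p'_def by auto
  hence "Cbar_edge N p' f (s j) \<le> card (insert j {i\<in>{1..N}. f \<in> path_edges (p i) \<and> bucket (p i) = bucket (s j)})"
    unfolding Cbar_edge_def by (intro card_mono) auto
  also have "\<dots> \<le> cong f (bucket (s j)) + 1"
    unfolding cong_def by (simp add: card_insert_if)
  finally have "Cbar_path N p' (s j) \<le> cong f (bucket (s j)) + 1" using fe by simp
  moreover have "player_cost N p' j = Cbar_path N p' (s j) + Dbar (s j)"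
    unfolding player_cost_def p'_def by simp
  ultimately have "player_cost N p j \<le> cong f (bucket (s j)) + 1 + Ds"
    using nash_ineq Dbar_s_le[OF j] by linarith
  thus ?thesis using f by blast
qed


lemma Bs_sub: "Bs \<subseteq> {..<card V}"
proof
  fix b assume "b \<in> Bs"
  then obtain j where j: "j \<in> {1..N}" and b: "b = bucket (s j)" unfolding Bs_def by blast
  have "plen (s j) \<ge> 1" "plen (s j) < card V" using sp_facts[OF sp_s[OF j]] by auto
  thus "b \<in> {..<card V}" using bucket_less[of "s j"] b nV by auto
qed

lemma A_fin: "finite (A t)" and A_card: "card (A t) \<le> card V ^ 3"
proof -
  have EE: "finite E" "card E \<le> card V ^ 2" using card_E_le rg unfolding routing_game_def by auto
  have sub: "A t \<subseteq> E \<times> Bs" unfolding A_def by auto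
  have fB: "finite Bs" "card Bs \<le> card V" using Bs_sub finite_subset card_mono
    by (metis card_lessThan finite_lessThan)+
  show "finite (A t)" using sub EE fB finite_subset by blast
  have "card (A t) \<le> card (E \<times> Bs)" using sub EE fB by (intro card_mono) auto
  also have "\<dots> = card E * card Bs" by (rule card_cartesian_product)
  also have "\<dots> \<le> card V ^ 2 * card V" using EE fB by (intro mult_mono) auto
  finally show "card (A t) \<le> card V ^ 3" by (simp add: power3_eq_cube power2_eq_square)
qed

lemma expansion:
  assumes u: "Ds \<le> u"
  shows "card (A u) * u \<le> card (A (u - Ds)) * Cs * Ds"
proof -
  define R where "R = (\<lambda>(a::nat set \<times> nat) j. fst a \<in> path_edges (p j) \<and> bucket (p j) = snd a)"
  define J where "J = {j\<in>{1..N}. \<exists>a\<in>A u. R a j}"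
  have fJ: "finite J" unfolding J_def by simp
  have fA: "finite (A u)" by (rule A_fin)
  have "card (A u) * u = (\<Sum>a\<in>A u. u)" by simp
  also have "\<dots> \<le> (\<Sum>a\<in>A u. card {j\<in>J. R a j})"
  proof (rule sum_mono)
    fix a assume a: "a \<in> A u"
    have "{j\<in>J. R a j} = {j\<in>{1..N}. fst a \<in> path_edges (p j) \<and> bucket (p j) = snd a}"
      unfolding J_def R_def using a by auto
    thus "u \<le> card {j\<in>J. R a j}" using a unfolding A_def cong_def by auto
  qed
  also have "\<dots> = (\<Sum>a\<in>A u. \<Sum>j\<in>J. if R a j then 1 else 0)"
    using fJ by (simp add: sum.inter_filter[symmetric])
  also have "\<dots> = (\<Sum>j\<in>J. \<Sum>a\<in>A u. if R a j then 1 else 0)" by (rule sum.swap)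
  also have "\<dots> = (\<Sum>j\<in>J. card {a\<in>A u. R a j})"
    using fA by (simp add: sum.inter_filter[symmetric])
  also have "\<dots> \<le> (\<Sum>j\<in>J. Ds)"
  proof (rule sum_mono)
    fix j assume jJ: "j \<in> J"
    then obtain a where j: "j \<in> {1..N}" and a: "a \<in> A u" "R a j" unfolding J_def by blast
    have "snd a \<in> Bs" using a unfolding A_def by auto
    then obtain i where i: "i \<in> {1..N}" "bucket (p j) = bucket (s i)"
      using a unfolding Bs_def R_def by auto
    have "{a\<in>A u. R a j} \<subseteq> path_edges (p j) \<times> {bucket (p j)}" unfolding R_def by auto
    hence "card {a\<in>A u. R a j} \<le> card (path_edges (p j) \<times> {bucket (p j)})"
      by (intro card_mono) (auto simp: path_edges_finite)
    also have "\<dots> = card (path_edges (p j))" by (simp add: card_cartesian_product)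
    also have "\<dots> \<le> plen (p j)" by (rule path_edges_card)
    also have "\<dots> \<le> Dbar (p j)" using plen_le_Dbar sp_facts(1)[OF sp_p[OF j]] by blast
    also have "\<dots> = Dbar (s i)" using i unfolding Dbar_def by simp
    also have "\<dots> \<le> Ds" using Dbar_s_le[OF i(1)] .
    finally show "card {a\<in>A u. R a j} \<le> Ds" .
  qed
  also have "\<dots> = card J * Ds" by simp
  finally have partA: "card (A u) * u \<le> card J * Ds" .
  have "\<forall>j\<in>J. \<exists>g. g \<in> A (u - Ds) \<and> fst g \<in> path_edges (s j) \<and> snd g = bucket (s j)"
  proof
    fix j assume jJ: "j \<in> J"
    then obtain a where j: "j \<in> {1..N}" and a: "a \<in> A u" "R a j" unfolding J_def by blast
    have "u \<le> cong (fst a) (snd a)" using a unfolding A_def by auto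
    hence "u + Dbar (p j) \<le> player_cost N p j"
      using pc_lower[OF j, of "fst a"] a unfolding R_def by auto
    moreover obtain f where f: "f \<in> path_edges (s j)" and
      fc: "player_cost N p j \<le> cong f (bucket (s j)) + 1 + Ds" using pc_upper[OF j] by blast
    ultimately have "u - Ds \<le> cong f (bucket (s j))" using Dbar_pos[of "p j"] by linarith
    moreover have "f \<in> E" using f sp_facts(3)[OF sp_s[OF j]] by blast
    moreover have "bucket (s j) \<in> Bs" using j unfolding Bs_def by blast
    ultimately show "\<exists>g. g \<in> A (u - Ds) \<and> fst g \<in> path_edges (s j) \<and> snd g = bucket (s j)"
      using f unfolding A_def by (intro exI[of _ "(f, bucket (s j))"]) auto
  qed
  then obtain g where g: "\<And>j. j \<in> J \<Longrightarrow> g j \<in> A (u - Ds) \<and> fst (g j) \<in> path_edges (s j) \<and> snd (g j) = bucket (s j)"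
    by metis
  have "J \<subseteq> (\<Union>a\<in>A (u - Ds). {j\<in>J. g j = a})" using g by blast
  hence "card J \<le> card (\<Union>a\<in>A (u - Ds). {j\<in>J. g j = a})"
    using fJ A_fin by (intro card_mono) auto
  also have "\<dots> \<le> (\<Sum>a\<in>A (u - Ds). card {j\<in>J. g j = a})" by (rule card_UN_le) (rule A_fin)
  also have "\<dots> \<le> (\<Sum>a\<in>A (u - Ds). Cs)"
  proof (rule sum_mono)
    fix a assume "a \<in> A (u - Ds)"
    show "card {j\<in>J. g j = a} \<le> Cs"
    proof (cases "{j\<in>J. g j = a} = {}")
      case True show ?thesis unfolding True by simp
    next
      case False
      then obtain j0 where j0: "j0 \<in> J" "g j0 = a" by blast
      have j01: "j0 \<in> {1..N}" using j0 unfolding J_def by auto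
      have "{j\<in>J. g j = a} \<subseteq> {i\<in>{1..N}. fst a \<in> path_edges (s i) \<and> bucket (s i) = bucket (s j0)}"
      proof
        fix j assume jj: "j \<in> {j\<in>J. g j = a}"
        hence "j \<in> J" "g j = a" by auto
        hence "fst a \<in> path_edges (s j)" "snd a = bucket (s j)" "j \<in> {1..N}"
          using g unfolding J_def by auto
        moreover have "snd a = bucket (s j0)" using g[OF j0(1)] j0(2) by auto
        ultimately show "j \<in> {i\<in>{1..N}. fst a \<in> path_edges (s i) \<and> bucket (s i) = bucket (s j0)}"
          by auto
      qed
      hence "card {j\<in>J. g j = a} \<le> card {i\<in>{1..N}. fst a \<in> path_edges (s i) \<and> bucket (s i) = bucket (s j0)}"
        by (intro card_mono) auto
      also have "\<dots> \<le> Cs" using fiber_le[OF j01] g[OF j0(1)] j0 by simp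
      finally show ?thesis .
    qed
  qed
  also have "\<dots> = card (A (u - Ds)) * Cs" by simp
  finally have "card J \<le> card (A (u - Ds)) * Cs" .
  hence "card J * Ds \<le> card (A (u - Ds)) * Cs * Ds" by simp
  thus ?thesis using partA by linarith
qed


lemma iterate:
  assumes t: "2 * Cs * Ds \<le> t"
  shows "2 ^ r * card (A (t + r * Ds)) \<le> card (A t)"
proof (induction r)
  case 0 show ?case by simp
next
  case (Suc r)
  define u where "u = t + Suc r * Ds"
  have u1: "u - Ds = t + r * Ds" unfolding u_def by simp
  have u2: "2 * Cs * Ds \<le> u" using t unfolding u_def by simp
  have "card (A u) * 2 * (Cs * Ds) \<le> card (A u) * u" using u2 by (simp add: mult.assoc)
  also have "\<dots> \<le> card (A (u - Ds)) * Cs * Ds" by (rule expansion) (simp add: u_def)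
  finally have "card (A u) * 2 * (Cs * Ds) \<le> card (A (t + r * Ds)) * (Cs * Ds)"
    using u1 by (simp add: mult.assoc)
  hence "card (A u) * 2 \<le> card (A (t + r * Ds))" using Cs_pos Ds_pos by simp
  hence "2 ^ Suc r * card (A u) \<le> 2 ^ r * card (A (t + r * Ds))" by simp
  thus ?case using Suc.IH unfolding u_def by linarith
qed

lemma pc_bound:
  assumes j: "j \<in> {1..N}"
  shows "real (player_cost N p j) \<le> real (2 * Cs * Ds + 2 * Ds + 1) + real (3 * Ds) * log 2 (card V)"
proof -
  obtain f where f: "f \<in> path_edges (s j)" and
      fc: "player_cost N p j \<le> cong f (bucket (s j)) + 1 + Ds" using pc_upper[OF j] by blast
  define T where "T = cong f (bucket (s j))"
  have inA: "(f, bucket (s j)) \<in> A T"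
    using f sp_facts(3)[OF sp_s[OF j]] j unfolding A_def T_def Bs_def by auto
  have nV2: "real (card V) \<ge> 2" using nV by simp
  have lg: "log 2 (card V) \<ge> 1" using nV2 by simp
  have "real T \<le> real (2 * Cs * Ds) + real Ds + 3 * real Ds * log 2 (card V)"
  proof (cases "T < 2 * Cs * Ds")
    case True
    have "real T \<le> real (2 * Cs * Ds)" using of_nat_mono[OF less_imp_le[OF True]] .
    moreover have "0 \<le> 3 * real Ds * log 2 (card V)" using lg by simp
    ultimately show ?thesis by linarith
  next
    case False
    define r where "r = (T - 2 * Cs * Ds) div Ds"
    define t where "t = T - r * Ds"
    have dm: "(T - 2 * Cs * Ds) div Ds * Ds + (T - 2 * Cs * Ds) mod Ds = T - 2 * Cs * Ds"
      by (rule div_mult_mod_eq)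
    have ml: "(T - 2 * Cs * Ds) mod Ds < Ds" using Ds_pos by (intro mod_less_divisor) simp
    have rD: "r * Ds \<le> T - 2 * Cs * Ds" using dm unfolding r_def by linarith
    hence t1: "2 * Cs * Ds \<le> t" and t2: "t + r * Ds = T" using False unfolding t_def by auto
    have "T - 2 * Cs * Ds < r * Ds + Ds" using dm ml unfolding r_def by linarith
    hence Tlt: "T < 2 * Cs * Ds + Ds + r * Ds" using False by linarith
    have "card (A T) \<ge> 1" using inA A_fin by (metis One_nat_def Suc_leI card_gt_0_iff empty_iff)
    hence "2 ^ r \<le> 2 ^ r * card (A T)" by simp
    also have "\<dots> \<le> card (A t)" using iterate[OF t1, of r] t2 by simp
    also have "\<dots> \<le> card V ^ 3" by (rule A_card)
    finally have "(2::real) ^ r \<le> real (card V) ^ 3" by (metis of_nat_le_iff of_nat_numeral of_nat_power)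
    hence "log 2 (2 ^ r) \<le> log 2 (real (card V) ^ 3)" using nV2 by (subst log_le_cancel_iff) auto
    hence rb: "real r \<le> 3 * log 2 (card V)" using nV2 by (simp add: log_nat_power)
    have "real T \<le> real (2 * Cs * Ds + Ds + r * Ds)" using of_nat_mono[OF less_imp_le[OF Tlt]] .
    also have "\<dots> = real (2 * Cs * Ds) + real Ds + real r * real Ds" by simp
    finally have "real T \<le> real (2 * Cs * Ds) + real Ds + real r * real Ds" .
    moreover have "real r * real Ds \<le> 3 * log 2 (card V) * real Ds"
      by (rule mult_right_mono[OF rb]) simp
    moreover have "3 * log 2 (card V) * real Ds = 3 * real Ds * log 2 (card V)" by simp
    ultimately show ?thesis by linarith
  qed
  moreover have "real (player_cost N p j) \<le> real T + 1 + real Ds" using fc unfolding T_def by linarith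
  ultimately show ?thesis by simp
qed

lemma sc_bound:
  "real (social_cost N p) \<le> 18 * Cs * Ds * (log 2 (card V))\<^sup>2"
proof -
  define B where "B = real (2 * Cs * Ds + 2 * Ds + 1) + real (3 * Ds) * log 2 (card V)"
  have ne: "{1..N} \<noteq> {}" using N1 by auto
  have "Cbar N p \<in> (\<lambda>i. Cbar_path N p (p i)) ` {1..N}" unfolding Cbar_def using ne by (intro Max_in) auto
  then obtain i1 where i1: "i1 \<in> {1..N}" "Cbar N p = Cbar_path N p (p i1)" by blast
  have "Dbar_max N p \<in> (\<lambda>i. Dbar (p i)) ` {1..N}" unfolding Dbar_max_def using ne by (intro Max_in) auto
  then obtain i2 where i2: "i2 \<in> {1..N}" "Dbar_max N p = Dbar (p i2)" by blast
  have "Cbar N p \<le> player_cost N p i1" using i1 unfolding player_cost_def by simp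
  moreover have "Dbar_max N p \<le> player_cost N p i2" using i2 unfolding player_cost_def by simp
  ultimately have "real (social_cost N p) \<le> real (player_cost N p i1) + real (player_cost N p i2)"
    unfolding social_cost_def by simp
  also have "\<dots> \<le> B + B" using pc_bound[OF i1(1)] pc_bound[OF i2(1)] unfolding B_def by (rule add_mono)
  also have "\<dots> = 2 * B" by simp
  finally have sc: "real (social_cost N p) \<le> 2 * B" .
  define L where "L = log 2 (real (card V))"
  have nV2: "real (card V) \<ge> 2" using nV by simp
  have L1: "L \<ge> 1" using nV2 unfolding L_def by simp
  have LL: "L \<le> L\<^sup>2" using L1 by (simp add: power2_eq_square)
  have L2: "1 \<le> L\<^sup>2" using L1 LL by linarith
  define c where "c = real Cs" define d where "d = real Ds"
  have c1: "c \<ge> 1" using Cs_pos unfolding c_def by simp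
  have d1: "d \<ge> 1" using Ds_pos unfolding d_def by simp
  have "1 * 1 \<le> c * d" using c1 d1 by (intro mult_mono) auto
  hence cd: "c * d \<ge> 1" by simp
  have cd2: "c * d \<ge> d" using c1 d1 by simp
  have "c * d * 1 \<le> c * d * L\<^sup>2" using cd by (intro mult_left_mono[OF L2]) simp
  hence e0: "c * d \<le> c * d * L\<^sup>2" by simp
  hence e1: "2 * c * d \<le> 2 * c * d * L\<^sup>2" by simp
  have e2: "2 * d \<le> 2 * c * d * L\<^sup>2" using e0 cd2 by linarith
  have e3: "1 \<le> c * d * L\<^sup>2" using e0 cd by linarith
  have e4: "3 * d * L \<le> 3 * c * d * L\<^sup>2"
  proof -
    have "d * L \<le> c * d * L" using cd2 L1 by (intro mult_right_mono) auto
    also have "\<dots> \<le> c * d * L\<^sup>2" using LL cd by (intro mult_left_mono) auto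
    finally show ?thesis by simp
  qed
  define M where "M = c * d * L\<^sup>2"
  have f1: "c * d \<le> M" using e0 unfolding M_def .
  have f2: "d \<le> M" using e0 cd2 unfolding M_def by linarith
  have f3: "1 \<le> M" using e3 unfolding M_def .
  have f4: "d * L \<le> M" using e4 unfolding M_def by simp
  have "2 * B = 4 * (c * d) + 4 * d + 2 + 6 * (d * L)" unfolding B_def c_def d_def L_def by (simp add: algebra_simps)
  hence "2 * B \<le> 18 * M" using f1 f2 f3 f4 by linarith
  hence "2 * B \<le> 18 * c * d * L\<^sup>2" unfolding M_def by (simp add: mult.assoc)
  thus ?thesis using sc unfolding c_def d_def L_def by simp
qed

end

theorem mainTheorem15:
  shows "\<exists>c::real. c > 0 \<and>
    (\<forall>V E N P src dst pstar.
       routing_game V E N P src dst \<and> card V \<ge> 2 \<and> optimal_routing N P pstar \<longrightarrow>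
       (\<forall>p. nash_routing N P p \<longrightarrow>
          real (social_cost N p) / real (social_cost N pstar)
          \<le> c * (real (Cbar N pstar) * real (Dbar_max N pstar)
                 / (real (Cbar N pstar) + real (Dbar_max N pstar)))
              * (log 2 (real (card V)))\<^sup>2))"
proof (intro exI[of _ 18] conjI allI impI)
  fix V E N P src dst pstar p
  assume h: "routing_game V E N P src dst \<and> card V \<ge> 2 \<and> optimal_routing N P pstar"
    and n: "nash_routing N P p"
  interpret nash_setup V E N P src dst pstar p using h n by unfold_locales auto
  define S where "S = real (Cbar N pstar) + real (Dbar_max N pstar)"
  have S: "real (social_cost N pstar) = S" "S > 0" unfolding S_def social_cost_def using Cs_pos by auto
  have "real (social_cost N p) / S \<le> (18 * real Cs * real Ds * (log 2 (card V))\<^sup>2) / S"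
    using sc_bound S by (intro divide_right_mono) auto
  thus "real (social_cost N p) / real (social_cost N pstar)
          \<le> 18 * (real (Cbar N pstar) * real (Dbar_max N pstar)
                 / (real (Cbar N pstar) + real (Dbar_max N pstar)))
              * (log 2 (real (card V)))\<^sup>2"
    using S unfolding S_def by (simp add: field_simps)
qed simp

end
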